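(* Let $\gamma\geq0$ and $G=(V,E,\omega)\in\mathcal C_\gamma$. Let $S\subset V$ be nonempty and define $\tau_\kappa(S):=\frac12\|L\chi_S\|_{\mathcal V,\infty}^{-1}$. Let $\tau\geq0$ and let $S^1:=\{i\in V:(e^{-\tau L}\chi_S)_i\geq\frac12\}$ be the first set in the OKMBO evolution of $S^0=S$. If $0\leq\tau<\tau_\kappa(S)$, then $S^1=S$.
   Context: $\mathcal{G}$ is the set of finite, simple, connected, undirected, edge-weighted graphs $G=(V,E,\omega)$ with $V=\{1,\dots,n\}$, $n\geq2$, weights $\omega_{ij}=\omega_{ji}>0$ on edges, $0$ otherwise. $d_i=\sum_j\omega_{ij}$. $\mathcal V$: functions $V\to\mathbb R$; $\|u\|_{\mathcal V,\infty}=\max_i|u_i|$; $\chi_S$ indicator of $S$. Fixed $r\in[0,1]$: $(\Delta u)_i=d_i^{-r}\sum_j\omega_{ij}(u_i-u_j)$, $\mathcal M(u)=\sum_id_i^ru_i$, $\mathrm{vol}(V)=\sum_id_i^r$, $\mathcal A(u)=\frac{\mathcal M(u)}{\mathrm{vol}(V)}\chi_V$. For $u\in\mathcal V$ let $\varphi$ be the unique solution of $\Delta\varphi=u-\mathcal A(u)$, $\mathcal M(\varphi)=0$, and $Lu:=\Delta u+\gamma\varphi$; $e^{-\tau L}$ is the operator exponential (so $e^{-\tau L}u_0$ is the value at time $\tau$ of the solution of $du/dt=-Lu$, $u(0)=u_0$). Equilibrium measure $\nu^S$ ($S\subsetneq V$): unique $\nu$ with $(\Delta\nu)_i=1$ on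 $S$, $\nu=0$ off $S$. $f^j:=\nu^{V\setminus\{j\}}-\mathcal A(\nu^{V\setminus\{j\}})$. $\mathcal C^0=\{G\in\mathcal G:\forall j\ \forall i\neq j:\ \omega_{ij}>0\text{ or }f^j_i\geq0\}$; for $\gamma>0$, $\mathcal C_\gamma=\{G\in\mathcal C^0:\forall j\ \forall i\neq j:\ \omega_{ij}=0\text{ or }d_i^{-r}\omega_{ij}+\gamma\frac{d_j^r}{\mathrm{vol}(V)}f^j_i>0\}$; $\mathcal C_0:=\mathcal G$. *)

theory Defs
  imports "HOL-Analysis.Analysis"
begin

text \<open>A graph on V = {1..n} is given by n and a weight function w; only the
values of w on V x V are relevant.  Functions on V are functions nat => real,
only their values on V are relevant.\<close>

definition Vset :: "nat \<Rightarrow> nat set" where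
  "Vset n = {1..n}"

definition is_graph :: "nat \<Rightarrow> (nat \<Rightarrow> nat \<Rightarrow> real) \<Rightarrow> bool" where
  "is_graph n w \<longleftrightarrow> n \<ge> 2 \<and>
     (\<forall>i\<in>Vset n. \<forall>j\<in>Vset n. w i j = w j i \<and> w i j \<ge> 0) \<and>
     (\<forall>i\<in>Vset n. w i i = 0) \<and>
     (\<forall>i\<in>Vset n. \<forall>j\<in>Vset n.
        (i, j) \<in> {(a, b). a \<in> Vset n \<and> b \<in> Vset n \<and> w a b > 0}\<^sup>*)"

definition deg :: "nat \<Rightarrow> (nat \<Rightarrow> nat \<Rightarrow> real) \<Rightarrow> nat \<Rightarrow> real" where
  "deg n w i = (\<Sum>j\<in>Vset n. w i j)"

definition Lap :: "nat \<Rightarrow> (nat \<Rightarrow> nat \<Rightarrow> real) \<Rightarrow> real \<Rightarrow> (nat \<Rightarrow> real) \<Rightarrow> nat \<Rightarrow> real" where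
  "Lap n w r u = (\<lambda>i. deg n w i powr (- r) * (\<Sum>j\<in>Vset n. w i j * (u i - u j)))"

definition mass :: "nat \<Rightarrow> (nat \<Rightarrow> nat \<Rightarrow> real) \<Rightarrow> real \<Rightarrow> (nat \<Rightarrow> real) \<Rightarrow> real" where
  "mass n w r u = (\<Sum>i\<in>Vset n. deg n w i powr r * u i)"

definition vol :: "nat \<Rightarrow> (nat \<Rightarrow> nat \<Rightarrow> real) \<Rightarrow> real \<Rightarrow> real" where
  "vol n w r = (\<Sum>i\<in>Vset n. deg n w i powr r)"

definition avg :: "nat \<Rightarrow> (nat \<Rightarrow> nat \<Rightarrow> real) \<Rightarrow> real \<Rightarrow> (nat \<Rightarrow> real) \<Rightarrow> nat \<Rightarrow> real" where
  "avg n w r u = (\<lambda>i. mass n w r u / vol n w r)"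

definition phi :: "nat \<Rightarrow> (nat \<Rightarrow> nat \<Rightarrow> real) \<Rightarrow> real \<Rightarrow> (nat \<Rightarrow> real) \<Rightarrow> nat \<Rightarrow> real" where
  "phi n w r u = (THE p. (\<forall>i\<in>Vset n. Lap n w r p i = u i - avg n w r u i) \<and>
                         mass n w r p = 0 \<and> (\<forall>i. i \<notin> Vset n \<longrightarrow> p i = 0))"

definition Lop :: "nat \<Rightarrow> (nat \<Rightarrow> nat \<Rightarrow> real) \<Rightarrow> real \<Rightarrow> real \<Rightarrow> (nat \<Rightarrow> real) \<Rightarrow> nat \<Rightarrow> real" where
  "Lop n w r \<gamma> u = (\<lambda>i. Lap n w r u i + \<gamma> * phi n w r u i)"

definition expL :: "nat \<Rightarrow> (nat \<Rightarrow> nat \<Rightarrow> real) \<Rightarrow> real \<Rightarrow> real \<Rightarrow> real \<Rightarrow> (nat \<Rightarrow> real) \<Rightarrow> nat \<Rightarrow> real" where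
  "expL n w r \<gamma> \<tau> u = (\<lambda>i. \<Sum>k. (- \<tau>) ^ k / fact k * (((Lop n w r \<gamma>) ^^ k) u) i)"

definition supnorm :: "nat \<Rightarrow> (nat \<Rightarrow> real) \<Rightarrow> real" where
  "supnorm n u = Max ((\<lambda>i. \<bar>u i\<bar>) ` Vset n)"

text \<open>Equilibrium measure nu^S (S a proper subset of V).\<close>
definition eqmeas :: "nat \<Rightarrow> (nat \<Rightarrow> nat \<Rightarrow> real) \<Rightarrow> real \<Rightarrow> nat set \<Rightarrow> nat \<Rightarrow> real" where
  "eqmeas n w r S = (THE \<nu>. (\<forall>i\<in>S. Lap n w r \<nu> i = 1) \<and> (\<forall>i. i \<notin> S \<longrightarrow> \<nu> i = 0))"

definition fj :: "nat \<Rightarrow> (nat \<Rightarrow> nat \<Rightarrow> real) \<Rightarrow> real \<Rightarrow> nat \<Rightarrow> nat \<Rightarrow> real" where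
  "fj n w r j = (\<lambda>i. eqmeas n w r (Vset n - {j}) i - avg n w r (eqmeas n w r (Vset n - {j})) i)"

definition in_C0 :: "nat \<Rightarrow> (nat \<Rightarrow> nat \<Rightarrow> real) \<Rightarrow> real \<Rightarrow> bool" where
  "in_C0 n w r \<longleftrightarrow> is_graph n w \<and>
     (\<forall>j\<in>Vset n. \<forall>i\<in>Vset n. i \<noteq> j \<longrightarrow> w i j > 0 \<or> fj n w r j i \<ge> 0)"

definition in_Cgamma :: "nat \<Rightarrow> (nat \<Rightarrow> nat \<Rightarrow> real) \<Rightarrow> real \<Rightarrow> real \<Rightarrow> bool" where
  "in_Cgamma n w r \<gamma> \<longleftrightarrow>
     (if \<gamma> = 0 then is_graph n w
      else in_C0 n w r \<and>
        (\<forall>j\<in>Vset n. \<forall>i\<in>Vset n. i \<noteq> j \<longrightarrow> w i j = 0 \<or>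
           deg n w i powr (- r) * w i j
             + \<gamma> * (deg n w j powr r / vol n w r) * fj n w r j i > 0))"

definition tau_kappa :: "nat \<Rightarrow> (nat \<Rightarrow> nat \<Rightarrow> real) \<Rightarrow> real \<Rightarrow> real \<Rightarrow> nat set \<Rightarrow> ereal" where
  "tau_kappa n w r \<gamma> S =
     (let N = supnorm n (Lop n w r \<gamma> (indicator S)) in
      if N = 0 then \<infinity> else ereal (1 / (2 * N)))"

definition okmbo_step :: "nat \<Rightarrow> (nat \<Rightarrow> nat \<Rightarrow> real) \<Rightarrow> real \<Rightarrow> real \<Rightarrow> real \<Rightarrow> nat set \<Rightarrow> nat set" where
  "okmbo_step n w r \<gamma> \<tau> S = {i\<in>Vset n. expL n w r \<gamma> \<tau> (indicator S) i \<ge> 1/2}"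

end

theory Submission
  imports Defs
begin


lemma expsum: "(\<lambda>n. (x::real)^n / fact n) sums exp x"
  using exp_converges[of x] by (simp add: divide_inverse mult.commute)

lemma pascal_step:
  fixes X :: "nat \<Rightarrow> real" and z :: real
  shows "(\<Sum>j\<le>k. of_nat (k choose j) * z^(k-j) * X (Suc j)) + z * (\<Sum>j\<le>k. of_nat (k choose j) * z^(k-j) * X j)
     = (\<Sum>j\<le>Suc k. of_nat (Suc k choose j) * z^(Suc k - j) * X j)"
proof -
  have R: "(\<Sum>j\<le>Suc k. of_nat (Suc k choose j) * z^(Suc k - j) * X j)
     = z^(Suc k) * X 0 + (\<Sum>j\<le>k. of_nat (k choose j) * z^(k-j) * X (Suc j))
        + (\<Sum>j\<le>k. of_nat (k choose Suc j) * z^(k-j) * X (Suc j))"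
    by (subst sum.atMost_Suc_shift) (simp add: sum.distrib algebra_simps)
  have "z * (\<Sum>j\<le>k. of_nat (k choose j) * z^(k-j) * X j) = (\<Sum>j\<le>k. of_nat (k choose j) * z^(Suc k-j) * X j)"
    by (simp add: sum_distrib_left algebra_simps Suc_diff_le)
  also have "\<dots> = (\<Sum>j\<le>Suc k. of_nat (k choose j) * z^(Suc k-j) * X j)"
    by simp
  also have "\<dots> = z^(Suc k) * X 0 + (\<Sum>j\<le>k. of_nat (k choose Suc j) * z^(k-j) * X (Suc j))"
    by (subst sum.atMost_Suc_shift) simp
  finally show ?thesis using R by simp
qed

locale EB = fixes V :: "nat set" and m :: "nat \<Rightarrow> nat \<Rightarrow> real"
  assumes finV: "finite V" and off: "\<And>i j. i \<in> V \<Longrightarrow> j \<in> V \<Longrightarrow> i \<noteq> j \<Longrightarrow> m i j \<le> 0"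
    and row: "\<And>i. i \<in> V \<Longrightarrow> (\<Sum>j\<in>V. m i j) = 0"
begin

definition Mop :: "(nat \<Rightarrow> real) \<Rightarrow> nat \<Rightarrow> real" where
  "Mop x = (\<lambda>i. if i \<in> V then (\<Sum>j\<in>V. m i j * x j) else 0)"
definition c :: real where "c = 1 + (\<Sum>i\<in>V. \<bar>m i i\<bar>)"
definition Bop :: "(nat \<Rightarrow> real) \<Rightarrow> nat \<Rightarrow> real" where
  "Bop x = (\<lambda>i. c * x i - Mop x i)"

lemma c_ge1: "c \<ge> 1" unfolding c_def by (simp add: sum_nonneg)

lemma c_diag: assumes "i \<in> V" shows "m i i \<le> c"
proof -
  have "\<bar>m i i\<bar> \<le> (\<Sum>i\<in>V. \<bar>m i i\<bar>)" by (rule member_le_sum) (use assms finV in auto)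
  then show ?thesis unfolding c_def by linarith
qed

lemma B_bound: assumes x: "\<And>j. j \<in> V \<Longrightarrow> \<bar>x j\<bar> \<le> K" and i: "i \<in> V"
  shows "\<bar>Bop x i\<bar> \<le> c * K"
proof -
  define b where "b j = (if i = j then c else 0) - m i j" for j
  have bnn: "b j \<ge> 0" if "j \<in> V" for j
    using off[OF i that] c_diag[OF i] by (cases "i = j") (auto simp: b_def)
  have cx: "(\<Sum>j\<in>V. (if i = j then c else 0) * x j) = c * x i"
  proof -
    have "(\<lambda>j. (if i = j then c else 0) * x j) = (\<lambda>j. if i = j then c * x i else 0)" by auto
    then show ?thesis using i finV by (simp only:) simp
  qed
  have cs: "(\<Sum>j\<in>V. (if i = j then c else (0::real))) = c" using i finV by simp
  have "Bop x i = (\<Sum>j\<in>V. b j * x j)"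
    using i cx by (simp add: Bop_def Mop_def b_def algebra_simps sum_subtractf)
  also have "\<bar>\<dots>\<bar> \<le> (\<Sum>j\<in>V. \<bar>b j * x j\<bar>)" by (rule sum_abs)
  also have "\<dots> \<le> (\<Sum>j\<in>V. b j * K)"
  proof (rule sum_mono)
    fix j assume j: "j \<in> V"
    have "\<bar>b j * x j\<bar> = b j * \<bar>x j\<bar>" using bnn[OF j] by (simp add: abs_mult)
    also have "\<dots> \<le> b j * K" using bnn[OF j] x[OF j] by (simp add: mult_left_mono)
    finally show "\<bar>b j * x j\<bar> \<le> b j * K" .
  qed
  also have "\<dots> = (\<Sum>j\<in>V. b j) * K" by (simp add: sum_distrib_right)
  also have "(\<Sum>j\<in>V. b j) = c" using cs row[OF i] by (simp add: b_def sum_subtractf)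
  finally show ?thesis .
qed

lemma Mop_scale: "Mop (\<lambda>l. a * x l) = (\<lambda>l. a * Mop x l)"
  by (simp add: Mop_def fun_eq_iff sum_distrib_left algebra_simps)

lemma Mop_sum: "Mop (\<lambda>l. \<Sum>j\<in>J. a j * f j l) = (\<lambda>l. \<Sum>j\<in>J. a j * Mop (f j) l)"
proof -
  have "(\<Sum>k\<in>V. m l k * (\<Sum>j\<in>J. a j * f j k)) = (\<Sum>j\<in>J. a j * (\<Sum>k\<in>V. m l k * f j k))" for l
  proof -
    have "(\<Sum>k\<in>V. m l k * (\<Sum>j\<in>J. a j * f j k)) = (\<Sum>k\<in>V. \<Sum>j\<in>J. a j * (m l k * f j k))"
      by (simp add: sum_distrib_left algebra_simps)
    also have "\<dots> = (\<Sum>j\<in>J. \<Sum>k\<in>V. a j * (m l k * f j k))" by (rule sum.swap)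
    also have "\<dots> = (\<Sum>j\<in>J. a j * (\<Sum>k\<in>V. m l k * f j k))" by (simp add: sum_distrib_left)
    finally show ?thesis .
  qed
  then show ?thesis by (simp add: Mop_def fun_eq_iff)
qed

lemma Bop_lin: "Bop (\<lambda>l. a * x l - y l) = (\<lambda>l. a * Bop x l - Bop y l)"
proof -
  have "Mop (\<lambda>l. a * x l - y l) = (\<lambda>l. a * Mop x l - Mop y l)"
    by (simp add: Mop_def fun_eq_iff sum_distrib_left algebra_simps sum_subtractf)
  then show ?thesis by (simp add: Bop_def fun_eq_iff algebra_simps)
qed

lemma binom: "(\<lambda>i. (-1)^k * (Mop^^k) u i) = (\<lambda>i. \<Sum>j\<le>k. of_nat (k choose j) * (-c)^(k-j) * (Bop^^j) u i)"
proof (induction k)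
  case 0 then show ?case by simp
next
  case (Suc k)
  let ?a = "\<lambda>j. of_nat (k choose j) * (-c)^(k-j)"
  have "(\<lambda>i. (-1)^Suc k * (Mop^^Suc k) u i) = (\<lambda>i. - Mop (\<lambda>l. (-1)^k * (Mop^^k) u l) i)"
    by (simp add: Mop_scale)
  also have "\<dots> = (\<lambda>i. - Mop (\<lambda>l. \<Sum>j\<le>k. ?a j * (Bop^^j) u l) i)"
    using Suc.IH by (simp add: mult.assoc)
  also have "\<dots> = (\<lambda>i. - (\<Sum>j\<le>k. ?a j * Mop ((Bop^^j) u) i))"
    by (simp only: Mop_sum)
  also have "\<dots> = (\<lambda>i. (\<Sum>j\<le>k. ?a j * (Bop^^Suc j) u i) + (-c) * (\<Sum>j\<le>k. ?a j * (Bop^^j) u i))"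
    by (simp add: Bop_def fun_eq_iff sum_distrib_left algebra_simps sum_subtractf sum.distrib sum_negf)
  also have "\<dots> = (\<lambda>i. \<Sum>j\<le>Suc k. of_nat (Suc k choose j) * (-c)^(Suc k-j) * (Bop^^j) u i)"
  proof
    fix i show "(\<Sum>j\<le>k. ?a j * (Bop^^Suc j) u i) + (-c) * (\<Sum>j\<le>k. ?a j * (Bop^^j) u i) =
       (\<Sum>j\<le>Suc k. of_nat (Suc k choose j) * (-c)^(Suc k-j) * (Bop^^j) u i)"
      using pascal_step[of k "-c" "\<lambda>j. (Bop^^j) u i"] by (simp only:)
  qed
  finally show ?case .
qed

lemma Ybound: assumes u: "\<And>i. i \<in> V \<Longrightarrow> \<bar>u i\<bar> \<le> 1"
  shows "i \<in> V \<Longrightarrow> \<bar>(Bop^^j) u i\<bar> \<le> c^j"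
proof (induction j arbitrary: i)
  case 0 then show ?case using u by simp
next
  case (Suc j)
  have "\<bar>Bop ((Bop^^j) u) i\<bar> \<le> c * c^j" by (rule B_bound) (use Suc in auto)
  then show ?case by simp
qed

lemma cpow: "c * (real j * c^(j-1)) = real j * c^j"
  by (cases j) auto

lemma ydiff: assumes N: "\<And>i. i \<in> V \<Longrightarrow> \<bar>Mop u i\<bar> \<le> N"
  shows "i \<in> V \<Longrightarrow> \<bar>c^j * u i - (Bop^^j) u i\<bar> \<le> real j * c^(j-1) * N"
proof (induction j arbitrary: i)
  case 0 then show ?case by simp
next
  case (Suc j)
  have eq: "c^Suc j * u i - (Bop^^Suc j) u i = c^j * Mop u i + Bop (\<lambda>l. c^j * u l - (Bop^^j) u l) i"
    by (simp add: Bop_lin) (simp add: Bop_def algebra_simps)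
  have c0: "c \<ge> 0" using c_ge1 by simp
  have b1: "\<bar>c^j * Mop u i\<bar> \<le> c^j * N" using N[OF Suc.prems] c0 by (simp add: abs_mult mult_left_mono)
  have b2: "\<bar>Bop (\<lambda>l. c^j * u l - (Bop^^j) u l) i\<bar> \<le> c * (real j * c^(j-1) * N)"
    by (rule B_bound) (use Suc in auto)
  have "\<bar>c^Suc j * u i - (Bop^^Suc j) u i\<bar> \<le> c^j * N + c * (real j * c^(j-1) * N)"
    unfolding eq using b1 b2 by linarith
  also have "\<dots> = real (Suc j) * c^(Suc j - 1) * N"
    using cpow[of j] by (simp add: algebra_simps)
  finally show ?case .
qed

lemma exp_bound:
  assumes u: "\<And>i. i \<in> V \<Longrightarrow> \<bar>u i\<bar> \<le> 1" and N: "\<And>i. i \<in> V \<Longrightarrow> \<bar>Mop u i\<bar> \<le> N"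
    and tau: "\<tau> \<ge> 0" and i: "i \<in> V"
  shows "\<bar>(\<Sum>k. (-\<tau>)^k / fact k * (Mop^^k) u i) - u i\<bar> \<le> \<tau> * N"
proof -
  have c0: "c > 0" using c_ge1 by simp
  define Y where "Y j = (Bop^^j) u i" for j
  define A where "A j = \<tau>^j / fact j * Y j" for j
  define Bs where "Bs k = (- c * \<tau>)^k / fact k" for k
  have eB: "Bs sums exp (- c * \<tau>)" unfolding Bs_def by (rule expsum)
  have eC: "(\<lambda>k. (c * \<tau>)^k / fact k) sums exp (c * \<tau>)" by (rule expsum)
  have absA: "norm (A j) \<le> (c * \<tau>)^j / fact j" for j
  proof -
    have "\<bar>Y j\<bar> \<le> c^j" unfolding Y_def by (rule Ybound[OF u i])
    then have "\<tau>^j / fact j * \<bar>Y j\<bar> \<le> \<tau>^j / fact j * c^j"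
      using tau by (intro mult_left_mono) auto
    then show ?thesis using tau by (simp add: A_def abs_mult power_mult_distrib algebra_simps)
  qed
  have sA: "summable (\<lambda>j. norm (A j))"
    by (rule summable_comparison_test[OF _ sums_summable[OF eC]]) (use absA in auto)
  have sB: "summable (\<lambda>k. norm (Bs k))"
  proof -
    have "norm (Bs k) = (c * \<tau>)^k / fact k" for k
      using tau c0 by (simp add: Bs_def abs_mult power_abs)
    then show ?thesis using sums_summable[OF eC] by simp
  qed
  have cp: "(\<Sum>j\<le>k. A j * Bs (k - j)) = (-\<tau>)^k / fact k * (Mop^^k) u i" for k
  proof -
    have "(\<Sum>j\<le>k. A j * Bs (k - j)) = (\<Sum>j\<le>k. \<tau>^k / fact k * (of_nat (k choose j) * (-c)^(k-j) * Y j))"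
    proof (rule sum.cong)
      fix j assume "j \<in> {..k}"
      then have jk: "j \<le> k" by simp
      have t: "\<tau>^j * \<tau>^(k-j) = \<tau>^k" using jk by (simp add: power_add[symmetric])
      have pw: "(- c * \<tau>)^(k-j) = \<tau>^(k-j) * (-c)^(k-j)"
        by (simp only: power_mult_distrib mult.commute)
      have "A j * Bs (k - j) = (\<tau>^j * \<tau>^(k-j)) * (-c)^(k-j) * Y j / (fact j * fact (k-j))"
        unfolding A_def Bs_def pw by (simp add: field_simps)
      also have "\<dots> = \<tau>^k / fact k * (fact k / (fact j * fact (k-j)) * (-c)^(k-j) * Y j)"
        unfolding t by (simp add: field_simps)
      also have "\<dots> = \<tau>^k / fact k * (of_nat (k choose j) * (-c)^(k-j) * Y j)"
        using binomial_fact[OF jk, where 'a=real] by simp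
      finally show "A j * Bs (k - j) = \<tau>^k / fact k * (of_nat (k choose j) * (-c)^(k-j) * Y j)" .
    qed simp
    also have "\<dots> = \<tau>^k / fact k * (\<Sum>j\<le>k. of_nat (k choose j) * (-c)^(k-j) * Y j)"
      by (simp add: sum_distrib_left)
    also have "(\<Sum>j\<le>k. of_nat (k choose j) * (-c)^(k-j) * Y j) = (-1)^k * (Mop^^k) u i"
      using fun_cong[OF binom[of k u], of i] by (simp add: Y_def)
    finally show ?thesis by (simp add: power_minus[of \<tau>] algebra_simps)
  qed
  have expL: "(\<Sum>k. (-\<tau>)^k / fact k * (Mop^^k) u i) = suminf A * exp (- c * \<tau>)"
    using Cauchy_product[OF sA sB] cp sums_unique[OF eB] by simp
  define D where "D j = \<tau>^j / fact j * (real j * c^(j-1) * N)" for j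
  have Dsuc: "D (Suc k) = \<tau> * N * ((c * \<tau>)^k / fact k)" for k
  proof -
    have f: "fact k > (0::real)" by simp
    have "D (Suc k) = (\<tau> * \<tau>^k) / (real (Suc k) * fact k) * (real (Suc k) * c^k * N)"
      by (simp add: D_def fact_Suc)
    also have "\<dots> = \<tau> * N * ((c * \<tau>)^k / fact k)"
      using f by (simp add: power_mult_distrib field_simps del: of_nat_Suc)
    finally show ?thesis .
  qed
  have "(\<lambda>k. D (Suc k)) sums (\<tau> * N * exp (c * \<tau>))"
    unfolding Dsuc by (rule sums_mult[OF eC])
  then have eD: "D sums (\<tau> * N * exp (c * \<tau>))" using sums_Suc_iff[of D] by (simp add: D_def)
  define E where "E j = \<tau>^j / fact j * (c^j * u i - Y j)" for j
  have absE: "norm (E j) \<le> D j" for j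
  proof -
    have "\<bar>c^j * u i - Y j\<bar> \<le> real j * c^(j-1) * N" unfolding Y_def by (rule ydiff[OF N i])
    then have "\<tau>^j / fact j * \<bar>c^j * u i - Y j\<bar> \<le> \<tau>^j / fact j * (real j * c^(j-1) * N)"
      using tau by (intro mult_left_mono) auto
    then show ?thesis using tau by (simp add: E_def D_def abs_mult)
  qed
  have sE: "summable (\<lambda>j. norm (E j))"
    by (rule summable_comparison_test[OF _ sums_summable[OF eD]]) (use absE in auto)
  have eU: "(\<lambda>j. (c * \<tau>)^j / fact j * u i) sums (exp (c * \<tau>) * u i)"
    by (rule sums_mult2[OF eC])
  have sAA: "summable A" using sA summable_norm_cancel by blast
  have "(\<lambda>j. (c * \<tau>)^j / fact j * u i - A j) sums (exp (c * \<tau>) * u i - suminf A)"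
    by (rule sums_diff[OF eU summable_sums[OF sAA]])
  moreover have "(\<lambda>j. (c * \<tau>)^j / fact j * u i - A j) = E"
    by (simp add: fun_eq_iff E_def A_def power_mult_distrib algebra_simps)
  ultimately have eE: "E sums (exp (c * \<tau>) * u i - suminf A)" by simp
  have "\<bar>exp (c * \<tau>) * u i - suminf A\<bar> = norm (suminf E)" using sums_unique[OF eE] by simp
  also have "\<dots> \<le> (\<Sum>j. norm (E j))" by (rule summable_norm[OF sE])
  also have "\<dots> \<le> suminf D" by (rule suminf_le[OF absE sE sums_summable[OF eD]])
  also have "\<dots> = \<tau> * N * exp (c * \<tau>)" using sums_unique[OF eD] by simp
  finally have bd: "\<bar>exp (c * \<tau>) * u i - suminf A\<bar> \<le> \<tau> * N * exp (c * \<tau>)" .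
  have ee: "exp (- c * \<tau>) * exp (c * \<tau>) = 1" by (simp add: exp_add[symmetric])
  have "(\<Sum>k. (-\<tau>)^k / fact k * (Mop^^k) u i) - u i = exp (- c * \<tau>) * (suminf A - exp (c * \<tau>) * u i)"
    unfolding expL using ee by (simp add: algebra_simps)
  then have "\<bar>(\<Sum>k. (-\<tau>)^k / fact k * (Mop^^k) u i) - u i\<bar> = exp (- c * \<tau>) * \<bar>exp (c * \<tau>) * u i - suminf A\<bar>"
    by (simp add: abs_mult abs_minus_commute)
  also have "\<dots> \<le> exp (- c * \<tau>) * (\<tau> * N * exp (c * \<tau>))"
    by (rule mult_left_mono[OF bd]) simp
  also have "\<dots> = \<tau> * N" using ee by (simp add: algebra_simps)
  finally show ?thesis .
qed

end



locale G = fixes n :: nat and w :: "nat \<Rightarrow> nat \<Rightarrow> real" and r :: real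
  assumes gr: "is_graph n w"
begin

abbreviation "V \<equiv> Vset n"
abbreviation "d \<equiv> deg n w"

lemma finV: "finite V" by (simp add: Vset_def)
lemma n2: "n \<ge> 2" using gr by (simp add: is_graph_def)
lemma wsym: "i \<in> V \<Longrightarrow> j \<in> V \<Longrightarrow> w i j = w j i" using gr by (simp add: is_graph_def)
lemma wnn: "i \<in> V \<Longrightarrow> j \<in> V \<Longrightarrow> w i j \<ge> 0" using gr by (simp add: is_graph_def)
lemma wdiag: "i \<in> V \<Longrightarrow> w i i = 0" using gr by (simp add: is_graph_def)
lemma conn: "i \<in> V \<Longrightarrow> j \<in> V \<Longrightarrow> (i, j) \<in> {(a, b). a \<in> V \<and> b \<in> V \<and> w a b > 0}\<^sup>*"
  using gr by (simp add: is_graph_def)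

lemma dpos: assumes "i \<in> V" shows "d i > 0"
proof -
  obtain j where j: "j \<in> V" "j \<noteq> i"
  proof (cases "i = 1")
    case True then show ?thesis using that[of 2] n2 by (auto simp: Vset_def)
  next
    case False then show ?thesis using that[of 1] n2 by (auto simp: Vset_def)
  qed
  from conn[OF assms j(1)] j(2) obtain k where k: "k \<in> V" "w i k > 0"
    by (auto elim: converse_rtranclE)
  have "w i k \<le> d i" unfolding deg_def
    by (rule member_le_sum) (use k wnn assms finV in auto)
  with k show ?thesis by linarith
qed

lemma dpow: "i \<in> V \<Longrightarrow> d i powr r * d i powr (- r) = 1"
  proof - assume i: "i \<in> V" have "d i > 0" using dpos[OF i] . then show ?thesis by (simp add: powr_minus field_simps) qed

lemma dpowpos: assumes "i \<in> V" shows "d i powr s > 0" using dpos[OF assms] by simp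

lemma volpos: "vol n w r > 0"
proof -
  have "V \<noteq> {}" using n2 by (auto simp: Vset_def)
  then show ?thesis unfolding vol_def using finV dpowpos by (simp add: sum_pos)
qed

definition lapm :: "nat \<Rightarrow> nat \<Rightarrow> real" where
  "lapm i j = d i powr (- r) * ((if i = j then d i else 0) - w i j)"

lemma Lap_mat: "i \<in> V \<Longrightarrow> Lap n w r x i = (\<Sum>j\<in>V. lapm i j * x j)"
proof -
  assume i: "i \<in> V"
  have "(\<Sum>j\<in>V. w i j * (x i - x j)) = d i * x i - (\<Sum>j\<in>V. w i j * x j)"
    by (simp add: deg_def algebra_simps sum_subtractf sum_distrib_right sum_distrib_left)
  moreover have "(\<Sum>j\<in>V. lapm i j * x j) = d i powr (- r) * ((\<Sum>j\<in>V. (if i = j then d i else 0) * x j) - (\<Sum>j\<in>V. w i j * x j))"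
    by (simp add: lapm_def sum_distrib_left algebra_simps sum_subtractf)
  moreover have "(\<Sum>j\<in>V. (if i = j then d i else 0) * x j) = d i * x i"
    proof -
    have "(\<lambda>j. (if i = j then d i else 0) * x j) = (\<lambda>j. if i = j then d i * x i else 0)" by auto
    then show ?thesis using i finV by (simp only:) simp
  qed
  ultimately show ?thesis by (simp add: Lap_def)
qed

lemma Lap_rowsum: "i \<in> V \<Longrightarrow> (\<Sum>j\<in>V. lapm i j) = 0"
  using Lap_mat[of i "\<lambda>_. 1"] by (simp add: Lap_def)

lemma Lap_mass: "(\<Sum>i\<in>V. d i powr r * Lap n w r x i) = 0"
proof -
  have "(\<Sum>i\<in>V. d i powr r * Lap n w r x i) = (\<Sum>i\<in>V. \<Sum>j\<in>V. w i j * (x i - x j))"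
    by (rule sum.cong) (auto simp: Lap_def dpow mult.assoc[symmetric])
  also have "\<dots> = (\<Sum>i\<in>V. \<Sum>j\<in>V. w i j * x i) - (\<Sum>i\<in>V. \<Sum>j\<in>V. w i j * x j)"
    by (simp add: algebra_simps sum_subtractf)
  also have "(\<Sum>i\<in>V. \<Sum>j\<in>V. w i j * x j) = (\<Sum>j\<in>V. \<Sum>i\<in>V. w i j * x j)" by (rule sum.swap)
  also have "\<dots> = (\<Sum>i\<in>V. \<Sum>j\<in>V. w i j * x i)"
    by (intro sum.cong refl) (simp add: wsym)
  finally show ?thesis by simp
qed

lemma Lap_lin: "Lap n w r (\<lambda>i. a * x i + b * y i) j = a * Lap n w r x j + b * Lap n w r y j"
proof -
  have "(\<Sum>k\<in>V. w j k * ((a * x j + b * y j) - (a * x k + b * y k))) =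
     (\<Sum>k\<in>V. a * (w j k * (x j - x k)) + b * (w j k * (y j - y k)))"
    by (rule sum.cong) (auto simp: algebra_simps)
  also have "\<dots> = a * (\<Sum>k\<in>V. w j k * (x j - x k)) + b * (\<Sum>k\<in>V. w j k * (y j - y k))"
    by (simp add: sum.distrib sum_distrib_left)
  finally show ?thesis by (simp add: Lap_def algebra_simps)
qed

lemma Lap_neg: "Lap n w r (\<lambda>i. - x i) j = - Lap n w r x j"
  using Lap_lin[of "-1" x 0 x j] by simp

lemma atmax: assumes i: "i \<in> V" and L: "Lap n w r x i \<le> 0" and mx: "\<forall>k\<in>V. x k \<le> x i"
  and j: "j \<in> V" "w i j > 0" shows "x j = x i"
proof -
  let ?s = "(\<Sum>k\<in>V. w i k * (x i - x k))"
  have p: "d i powr (- r) > 0" using dpowpos[OF i] .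
  have L': "d i powr (- r) * ?s \<le> 0" using L unfolding Lap_def .
  have nn: "\<forall>k\<in>V. w i k * (x i - x k) \<ge> 0"
  proof
    fix k assume k: "k \<in> V"
    have "w i k \<ge> 0" using wnn[OF i k] .
    moreover have "x i - x k \<ge> 0" using mx k by auto
    ultimately show "w i k * (x i - x k) \<ge> 0" by (rule mult_nonneg_nonneg)
  qed
  then have s0: "?s \<ge> 0" by (simp add: sum_nonneg)
  have "?s \<le> 0"
  proof (rule ccontr)
    assume "\<not> ?s \<le> 0"
    then have "?s > 0" by linarith
    then have "d i powr (- r) * ?s > 0" using p by (rule mult_pos_pos[rotated])
    then show False using L' by linarith
  qed
  then have "?s = 0" using s0 by linarith
  then have "\<forall>k\<in>V. w i k * (x i - x k) = 0" using nn by (subst (asm) sum_nonneg_eq_0_iff[OF finV]) auto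
  then have "w i j * (x i - x j) = 0" using j by blast
  then have "x i - x j = 0" using j(2) by simp
  then show ?thesis by linarith
qed

lemma propag: assumes S: "S \<subseteq> V" and L: "\<forall>i\<in>S. Lap n w r x i \<le> 0" and a: "a \<in> V"
  and mx: "\<forall>k\<in>V. x k \<le> x a" and b: "b \<in> V"
  shows "x b = x a \<or> (\<exists>y\<in>V-S. x y = x a)"
  using conn[OF a b]
proof (induction rule: rtrancl_induct)
  case base then show ?case by simp
next
  case (step b' c)
  show ?case
  proof (cases "x b' = x a")
    case True
    have bc: "b' \<in> V" "c \<in> V" "w b' c > 0" using step.hyps(2) by auto
    show ?thesis
    proof (cases "b' \<in> S")
      case True2: True
      have "x c = x b'" by (rule atmax) (use bc True2 L mx True in auto)
      then show ?thesis using True by simp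
    next
      case False then show ?thesis using True bc by auto
    qed
  next
    case False then show ?thesis using step.IH by auto
  qed
qed

lemma exmax: "\<exists>a\<in>V. \<forall>k\<in>V. (x k::real) \<le> x a"
proof -
  have "V \<noteq> {}" using n2 by (auto simp: Vset_def)
  then have ne: "x ` V \<noteq> {}" by simp
  have f: "finite (x ` V)" using finV by simp
  obtain a where a: "a \<in> V" "x a = Max (x ` V)" using Max_in[OF f ne] by auto
  have "\<forall>k\<in>V. x k \<le> x a" using a(2) Max_ge[OF f] by simp
  then show ?thesis using a(1) by blast
qed

lemma dir_le: assumes S: "S \<subseteq> V" "S \<noteq> V" and L: "\<forall>i\<in>S. Lap n w r x i \<le> 0"
  and z: "\<forall>i. i \<notin> S \<longrightarrow> x i = 0" and i: "i \<in> V" shows "x i \<le> 0"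
proof -
  obtain a where a: "a \<in> V" "\<forall>k\<in>V. x k \<le> x a" using exmax by blast
  obtain b where b: "b \<in> V" "b \<notin> S" using S by auto
  have "x a = 0" using propag[OF S(1) L a b(1)] b z by auto
  then show ?thesis using a i by auto
qed

lemma dir_uniq: assumes S: "S \<subseteq> V" "S \<noteq> V" and L: "\<forall>i\<in>S. Lap n w r x i = 0"
  and z: "\<forall>i. i \<notin> S \<longrightarrow> x i = 0" shows "x i = 0"
proof (cases "i \<in> V")
  case True
  have "x i \<le> 0" using dir_le[OF S _ z True] L by simp
  moreover have "- x i \<le> 0" using dir_le[OF S _ _ True, of "\<lambda>i. - x i"] L z by (simp add: Lap_neg)
  ultimately show ?thesis by simp
next
  case False then show ?thesis using z S by auto
qed

lemma dir_ex: assumes T: "T \<subseteq> V" "T \<noteq> V"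
  shows "S \<subseteq> T \<Longrightarrow> \<exists>\<nu>. (\<forall>i\<in>S. Lap n w r \<nu> i = f i) \<and> (\<forall>i. i \<notin> S \<longrightarrow> \<nu> i = 0)"
proof (induction S arbitrary: f rule: infinite_finite_induct)
  case (infinite S)
  have "S \<subseteq> V" using infinite.prems T(1) by blast
  then have "finite S" using finV finite_subset by blast
  then show ?case using infinite.hyps by blast
next
  case empty then show ?case by (intro exI[of _ "\<lambda>_. 0"]) simp
next
  case (insert k S')
  define ek where "ek = (\<lambda>i::nat. if i = k then 1 else (0::real))"
  obtain c where c: "\<forall>i\<in>S'. Lap n w r c i = - Lap n w r ek i" "\<forall>i. i \<notin> S' \<longrightarrow> c i = 0"
    using insert.IH[of "\<lambda>i. - Lap n w r ek i"] insert.prems by auto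
  obtain a where a: "\<forall>i\<in>S'. Lap n w r a i = f i" "\<forall>i. i \<notin> S' \<longrightarrow> a i = 0"
    using insert.IH[of f] insert.prems by auto
  define h where "h = (\<lambda>i. 1 * ek i + 1 * c i)"
  have Lh: "Lap n w r h i = Lap n w r ek i + Lap n w r c i" for i
    unfolding h_def Lap_lin by simp
  have hz: "\<forall>i. i \<notin> insert k S' \<longrightarrow> h i = 0" using c(2) by (auto simp: h_def ek_def)
  have hk: "h k = 1" using c(2) insert.hyps by (auto simp: h_def ek_def)
  have hS': "\<forall>i\<in>S'. Lap n w r h i = 0" using Lh c(1) by simp
  have "Lap n w r h k \<noteq> 0"
  proof
    assume "Lap n w r h k = 0"
    then have "\<forall>i\<in>insert k S'. Lap n w r h i = 0" using hS' by simp
    have sub: "insert k S' \<subseteq> V" "insert k S' \<noteq> V" using insert.prems T by auto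
    then have "h k = 0" using dir_uniq[OF sub, of h k] hz \<open>\<forall>i\<in>insert k S'. Lap n w r h i = 0\<close> by blast
    then show False using hk by simp
  qed
  define t where "t = (f k - Lap n w r a k) / Lap n w r h k"
  define nu where "nu = (\<lambda>i. 1 * a i + t * h i)"
  have Lnu: "Lap n w r nu i = Lap n w r a i + t * Lap n w r h i" for i
    unfolding nu_def Lap_lin by simp
  have "Lap n w r nu k = f k" unfolding Lnu t_def using \<open>Lap n w r h k \<noteq> 0\<close> by simp
  moreover have "\<forall>i\<in>S'. Lap n w r nu i = f i" using a(1) hS' Lnu by simp
  ultimately have "\<forall>i\<in>insert k S'. Lap n w r nu i = f i" by blast
  moreover have "\<forall>i. i \<notin> insert k S' \<longrightarrow> nu i = 0" using a(2) hz by (auto simp: nu_def)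
  ultimately show ?case by blast
qed

lemma eqmeas: assumes S: "S \<subseteq> V" "S \<noteq> V"
  shows "(\<forall>i\<in>S. Lap n w r (eqmeas n w r S) i = 1) \<and> (\<forall>i. i \<notin> S \<longrightarrow> eqmeas n w r S i = 0)"
proof -
  let ?P = "\<lambda>\<nu>. (\<forall>i\<in>S. Lap n w r \<nu> i = 1) \<and> (\<forall>i. i \<notin> S \<longrightarrow> \<nu> i = 0)"
  obtain v where v: "?P v" using dir_ex[OF S, of S "\<lambda>_. 1"] by auto
  have "\<And>u. ?P u \<Longrightarrow> u = v"
  proof
    fix u i assume u: "?P u"
    have "(\<lambda>j. 1 * u j + (-1) * v j) i = 0"
      by (rule dir_uniq[OF S]) (use u v in \<open>auto simp only: Lap_lin, auto\<close>)
    then show "u i = v i" by simp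
  qed
  then have "\<exists>!\<nu>. ?P \<nu>" using v by blast
  then show ?thesis unfolding eqmeas_def by (rule theI')
qed

lemma Lap_scale: "Lap n w r (\<lambda>i. a * x i) j = a * Lap n w r x j"
  using Lap_lin[of a x 0 x j] by simp

lemma Lap_shift: "Lap n w r (\<lambda>i. x i - c) j = Lap n w r x j"
  by (simp add: Lap_def)

abbreviation "vl \<equiv> vol n w r"

definition q :: "nat \<Rightarrow> nat \<Rightarrow> real" where
  "q j i = - (d j powr r / vl) * fj n w r j i"

lemma nu_props: assumes j: "j \<in> V"
  shows "(\<forall>i\<in>V-{j}. Lap n w r (eqmeas n w r (V-{j})) i = 1) \<and> (\<forall>i. i \<notin> V-{j} \<longrightarrow> eqmeas n w r (V-{j}) i = 0)"
  by (rule eqmeas) (use j in auto)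

lemma Lap_nu_j: assumes j: "j \<in> V"
  shows "Lap n w r (eqmeas n w r (V-{j})) j = 1 - vl / d j powr r"
proof -
  let ?v = "eqmeas n w r (V-{j})"
  have "0 = (\<Sum>i\<in>V. d i powr r * Lap n w r ?v i)" using Lap_mass by simp
  also have "\<dots> = d j powr r * Lap n w r ?v j + (\<Sum>i\<in>V-{j}. d i powr r * Lap n w r ?v i)"
    using sum.remove[OF finV j] by simp
  also have "(\<Sum>i\<in>V-{j}. d i powr r * Lap n w r ?v i) = (\<Sum>i\<in>V-{j}. d i powr r)"
    using nu_props[OF j] by (intro sum.cong) auto
  also have "\<dots> = vl - d j powr r"
    using sum.remove[OF finV j, of "\<lambda>i. d i powr r"] by (simp add: vol_def)
  finally have e: "d j powr r * Lap n w r ?v j = d j powr r - vl" by simp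
  have "d j powr r > 0" using dpowpos[OF j] .
  with e show ?thesis by (simp add: field_simps)
qed

lemma fj_eq: "fj n w r j = (\<lambda>i. eqmeas n w r (V-{j}) i - mass n w r (eqmeas n w r (V-{j})) / vl)"
  by (simp add: fj_def avg_def)

lemma mass_shift_gen: "mass n w r (\<lambda>i. x i - C) = mass n w r x - C * vl"
proof -
  have "mass n w r (\<lambda>i. x i - C) = (\<Sum>i\<in>V. d i powr r * x i - C * d i powr r)"
    unfolding mass_def by (rule sum.cong) (auto simp: algebra_simps)
  also have "\<dots> = mass n w r x - C * vl"
    by (simp add: sum_subtractf sum_distrib_left mass_def vol_def)
  finally show ?thesis .
qed

lemma mass_shift: "mass n w r (\<lambda>i. x i - mass n w r x / vl) = 0"
proof -
  have "mass n w r (\<lambda>i. x i - mass n w r x / vl) = mass n w r x - mass n w r x / vl * vl"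
    by (rule mass_shift_gen)
  then show ?thesis using volpos by simp
qed

lemma Lap_q: assumes i: "i \<in> V" and j: "j \<in> V"
  shows "Lap n w r (q j) i = (if i = j then 1 else 0) - d j powr r / vl"
proof -
  have "q j = (\<lambda>i. (- (d j powr r / vl)) * (eqmeas n w r (V-{j}) i - mass n w r (eqmeas n w r (V-{j})) / vl))"
    unfolding q_def fj_eq by simp
  then have "Lap n w r (q j) i = (- (d j powr r / vl)) * Lap n w r (eqmeas n w r (V-{j})) i"
    by (simp only: Lap_scale Lap_shift)
  also have "\<dots> = (if i = j then 1 else 0) - d j powr r / vl"
  proof (cases "i = j")
    case True
    have "d j powr r > 0" using dpowpos[OF j] .
    then show ?thesis using True Lap_nu_j[OF j] volpos by (simp add: field_simps)
  next
    case False
    then show ?thesis using nu_props[OF j] i by simp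
  qed
  finally show ?thesis .
qed

lemma mass_q: assumes j: "j \<in> V" shows "(\<Sum>i\<in>V. d i powr r * q j i) = 0"
proof -
  have "(\<Sum>i\<in>V. d i powr r * q j i) = - (d j powr r / vl) * mass n w r (fj n w r j)"
    by (simp add: q_def mass_def sum_distrib_left algebra_simps)
  also have "mass n w r (fj n w r j) = 0" unfolding fj_eq by (rule mass_shift)
  finally show ?thesis by simp
qed

definition P :: "(nat \<Rightarrow> real) \<Rightarrow> nat \<Rightarrow> real" where
  "P u = (\<lambda>i. if i \<in> V then (\<Sum>j\<in>V. u j * q j i) else 0)"

lemma P_sol: "(\<forall>i\<in>V. Lap n w r (P u) i = u i - avg n w r u i) \<and> mass n w r (P u) = 0 \<and> (\<forall>i. i \<notin> V \<longrightarrow> P u i = 0)"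
proof (intro conjI ballI allI impI)
  fix i assume i: "i \<in> V"
  have "Lap n w r (P u) i = (\<Sum>k\<in>V. lapm i k * (\<Sum>j\<in>V. u j * q j k))"
    using Lap_mat[OF i] by (simp add: P_def)
  also have "\<dots> = (\<Sum>k\<in>V. \<Sum>j\<in>V. u j * (lapm i k * q j k))"
    by (simp add: sum_distrib_left algebra_simps)
  also have "\<dots> = (\<Sum>j\<in>V. \<Sum>k\<in>V. u j * (lapm i k * q j k))" by (rule sum.swap)
  also have "\<dots> = (\<Sum>j\<in>V. u j * Lap n w r (q j) i)"
    using Lap_mat[OF i] by (simp add: sum_distrib_left)
  also have "\<dots> = (\<Sum>j\<in>V. u j * ((if i = j then 1 else 0) - d j powr r / vl))"
    using Lap_q[OF i] by simp
  also have "\<dots> = (\<Sum>j\<in>V. (if i = j then u j else 0) - d j powr r * u j / vl)"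
    by (rule sum.cong) (auto simp: algebra_simps)
  also have "\<dots> = (\<Sum>j\<in>V. (if i = j then u j else 0)) - (\<Sum>j\<in>V. d j powr r * u j) / vl"
    by (simp add: sum_subtractf sum_divide_distrib)
  also have "\<dots> = u i - avg n w r u i" using i finV by (simp add: avg_def mass_def)
  finally show "Lap n w r (P u) i = u i - avg n w r u i" .
next
  have "mass n w r (P u) = (\<Sum>i\<in>V. \<Sum>j\<in>V. u j * (d i powr r * q j i))"
    by (simp add: mass_def P_def sum_distrib_left algebra_simps)
  also have "\<dots> = (\<Sum>j\<in>V. \<Sum>i\<in>V. u j * (d i powr r * q j i))" by (rule sum.swap)
  also have "\<dots> = (\<Sum>j\<in>V. u j * (\<Sum>i\<in>V. d i powr r * q j i))" by (simp add: sum_distrib_left)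
  also have "\<dots> = 0" using mass_q by simp
  finally show "mass n w r (P u) = 0" .
next
  fix i assume "i \<notin> V" then show "P u i = 0" by (simp add: P_def)
qed

lemma phi_uniq: assumes a: "(\<forall>i\<in>V. Lap n w r p1 i = f i) \<and> mass n w r p1 = 0 \<and> (\<forall>i. i \<notin> V \<longrightarrow> p1 i = 0)"
  and b: "(\<forall>i\<in>V. Lap n w r p2 i = f i) \<and> mass n w r p2 = 0 \<and> (\<forall>i. i \<notin> V \<longrightarrow> p2 i = 0)"
  shows "p1 = p2"
proof -
  define x where "x = (\<lambda>i. 1 * p1 i + (-1) * p2 i)"
  have Lx: "Lap n w r x i = Lap n w r p1 i - Lap n w r p2 i" for i
    unfolding x_def Lap_lin by simp
  have L: "\<forall>i\<in>V. Lap n w r x i \<le> 0" using a b Lx by simp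
  have z: "\<forall>i. i \<notin> V \<longrightarrow> x i = 0" using a b by (simp add: x_def)
  have mx: "mass n w r x = mass n w r p1 - mass n w r p2"
    unfolding x_def mass_def by (simp add: sum_subtractf algebra_simps)
  have m: "mass n w r x = 0" using a b mx by simp
  obtain a where a: "a \<in> V" "\<forall>k\<in>V. x k \<le> x a" using exmax by blast
  have const: "\<forall>b\<in>V. x b = x a"
  proof
    fix b assume b: "b \<in> V"
    from propag[OF _ L a(1) a(2) b] show "x b = x a" by blast
  qed
  have "mass n w r x = (\<Sum>i\<in>V. d i powr r * x a)" unfolding mass_def
    by (rule sum.cong) (use const in auto)
  also have "\<dots> = x a * vl" by (simp add: vol_def sum_distrib_left mult.commute)
  finally have "x a = 0" using m volpos by simp
  then have x0: "x i = 0" for i using const z by (cases "i \<in> V") auto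
  show ?thesis
  proof
    fix i show "p1 i = p2 i" using x0[of i] by (simp add: x_def)
  qed
qed

lemma phi_eq: "phi n w r u = P u"
  unfolding phi_def
proof (rule the_equality)
  show "(\<forall>i\<in>V. Lap n w r (P u) i = u i - avg n w r u i) \<and> mass n w r (P u) = 0 \<and> (\<forall>i. i \<notin> V \<longrightarrow> P u i = 0)"
    by (rule P_sol)
  fix p assume "(\<forall>i\<in>V. Lap n w r p i = u i - avg n w r u i) \<and> mass n w r p = 0 \<and> (\<forall>i. i \<notin> V \<longrightarrow> p i = 0)"
  then show "p = P u" using phi_uniq[OF _ P_sol[of u]] by blast
qed

lemma q_colsum: assumes i: "i \<in> V" shows "(\<Sum>j\<in>V. q j i) = 0"
proof -
  have "P (\<lambda>_. 1) = (\<lambda>_. 0)"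
  proof (rule phi_uniq[where f = "\<lambda>_. 0"])
    show "(\<forall>i\<in>V. Lap n w r (P (\<lambda>_. 1)) i = 0) \<and> mass n w r (P (\<lambda>_. 1)) = 0 \<and> (\<forall>i. i \<notin> V \<longrightarrow> P (\<lambda>_. 1) i = 0)"
      using P_sol[of "\<lambda>_. 1"] volpos by (simp add: avg_def mass_def vol_def)
    show "(\<forall>i\<in>V. Lap n w r (\<lambda>_. 0) i = 0) \<and> mass n w r (\<lambda>_. 0) = 0 \<and> (\<forall>i. i \<notin> (V::nat set) \<longrightarrow> (0::real) = 0)"
      by (simp add: Lap_def mass_def)
  qed
  then have "P (\<lambda>_. 1) i = 0" by metis
  then show ?thesis using i by (simp add: P_def)
qed

definition mm :: "real \<Rightarrow> nat \<Rightarrow> nat \<Rightarrow> real" where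
  "mm \<gamma> i j = lapm i j + \<gamma> * q j i"

lemma Lop_mat: assumes i: "i \<in> V" shows "Lop n w r \<gamma> x i = (\<Sum>j\<in>V. mm \<gamma> i j * x j)"
proof -
  have "Lop n w r \<gamma> x i = (\<Sum>j\<in>V. lapm i j * x j) + \<gamma> * (\<Sum>j\<in>V. x j * q j i)"
    using i by (simp add: Lop_def Lap_mat phi_eq P_def)
  also have "\<dots> = (\<Sum>j\<in>V. mm \<gamma> i j * x j)"
    by (simp add: mm_def sum_distrib_left sum.distrib algebra_simps)
  finally show ?thesis .
qed

lemma mm_row: assumes i: "i \<in> V" shows "(\<Sum>j\<in>V. mm \<gamma> i j) = 0"
  using Lap_rowsum[OF i] q_colsum[OF i] by (simp add: mm_def sum.distrib sum_distrib_left[symmetric])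

lemma mm_off: assumes C: "in_Cgamma n w r \<gamma>" and g: "\<gamma> \<ge> 0" and i: "i \<in> V" and j: "j \<in> V" and ij: "i \<noteq> j"
  shows "mm \<gamma> i j \<le> 0"
proof -
  have e: "mm \<gamma> i j = - (d i powr (- r) * w i j + \<gamma> * (d j powr r / vl) * fj n w r j i)"
    using ij by (simp add: mm_def lapm_def q_def algebra_simps)
  have dp: "d i powr (- r) > 0" using dpowpos[OF i] .
  show ?thesis
  proof (cases "\<gamma> = 0")
    case True
    then show ?thesis using e dp wnn[OF i j] by simp
  next
    case False
    then have C0: "in_C0 n w r" and Cg: "w i j = 0 \<or> d i powr (- r) * w i j + \<gamma> * (d j powr r / vl) * fj n w r j i > 0"
      using C i j ij unfolding in_Cgamma_def by auto
    show ?thesis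
    proof (cases "w i j = 0")
      case True
      have "0 < w i j \<or> 0 \<le> fj n w r j i" using C0 i j ij unfolding in_C0_def by blast
      then have "fj n w r j i \<ge> 0" using True by simp
      moreover have "d j powr r / vl \<ge> 0" using dpowpos[OF j] volpos by simp
      ultimately have "\<gamma> * (d j powr r / vl) * fj n w r j i \<ge> 0" using g by (intro mult_nonneg_nonneg)
      then show ?thesis using e True by simp
    next
      case False then show ?thesis using Cg e by simp
    qed
  qed
qed

lemma main_bound: assumes C: "in_Cgamma n w r \<gamma>" and g: "\<gamma> \<ge> 0" and tau: "\<tau> \<ge> 0"
  and u: "\<And>i. i \<in> V \<Longrightarrow> \<bar>u i\<bar> \<le> 1" and N: "\<And>j. j \<in> V \<Longrightarrow> \<bar>Lop n w r \<gamma> u j\<bar> \<le> N"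
  and i: "i \<in> V"
  shows "\<bar>expL n w r \<gamma> \<tau> u i - u i\<bar> \<le> \<tau> * N"
proof -
  interpret E: EB V "mm \<gamma>"
    by unfold_locales (use finV mm_off[OF C g] mm_row in auto)
  have iter: "\<forall>i\<in>V. ((Lop n w r \<gamma>)^^k) u i = (E.Mop^^k) u i" for k
  proof (induction k)
    case 0 then show ?case by simp
  next
    case (Suc k)
    show ?case
    proof
      fix i assume i: "i \<in> V"
      have "((Lop n w r \<gamma>)^^Suc k) u i = (\<Sum>j\<in>V. mm \<gamma> i j * ((Lop n w r \<gamma>)^^k) u j)"
        using Lop_mat[OF i] by simp
      also have "\<dots> = (\<Sum>j\<in>V. mm \<gamma> i j * (E.Mop^^k) u j)" using Suc.IH by simp
      also have "\<dots> = (E.Mop^^Suc k) u i" using i by (simp add: E.Mop_def)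
      finally show "((Lop n w r \<gamma>)^^Suc k) u i = (E.Mop^^Suc k) u i" .
    qed
  qed
  have NM: "\<bar>E.Mop u j\<bar> \<le> N" if j: "j \<in> V" for j
    using N[OF j] iter[of 1] j by simp
  have "expL n w r \<gamma> \<tau> u i = (\<Sum>k. (-\<tau>)^k / fact k * (E.Mop^^k) u i)"
    unfolding expL_def using iter i by simp
  then show ?thesis using E.exp_bound[OF u NM tau i] by simp
qed

end

lemma graph_of_C: "in_Cgamma n w r \<gamma> \<Longrightarrow> is_graph n w"
  by (auto simp: in_Cgamma_def in_C0_def split: if_splits)

theorem lemma6p30:
  fixes n :: nat and w :: "nat \<Rightarrow> nat \<Rightarrow> real" and r \<gamma> \<tau> :: real and S :: "nat set"
  assumes "0 \<le> r" "r \<le> 1"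
    and "\<gamma> \<ge> 0"
    and "in_Cgamma n w r \<gamma>"
    and "S \<subseteq> Vset n" "S \<noteq> {}"
    and "0 \<le> \<tau>" "ereal \<tau> < tau_kappa n w r \<gamma> S"
  shows "okmbo_step n w r \<gamma> \<tau> S = S"
proof -
  interpret G n w r using graph_of_C[OF assms(4)] by unfold_locales
  define N where "N = supnorm n (Lop n w r \<gamma> (indicator S))"
  have fin: "finite ((\<lambda>i. \<bar>Lop n w r \<gamma> (indicator S) i\<bar>) ` V)" using finV by simp
  have Nb: "\<bar>Lop n w r \<gamma> (indicator S) j\<bar> \<le> N" if "j \<in> V" for j
    unfolding N_def supnorm_def using Max_ge[OF fin] that by simp
  have N0: "N \<ge> 0"
  proof -
    obtain j where "j \<in> S" using assms(6) by auto
    then show ?thesis using Nb[of j] assms(5) by fastforce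
  qed
  have small: "\<tau> * N < 1/2"
  proof (cases "N = 0")
    case True then show ?thesis by simp
  next
    case False
    then have "ereal \<tau> < ereal (1 / (2 * N))" using assms(8) by (simp add: tau_kappa_def N_def Let_def)
    then have "\<tau> < 1 / (2 * N)" by simp
    moreover have "N > 0" using N0 False by simp
    ultimately show ?thesis by (simp add: field_simps)
  qed
  have bd: "\<bar>expL n w r \<gamma> \<tau> (indicator S) i - indicator S i\<bar> < 1/2" if "i \<in> V" for i
  proof -
    have "\<bar>expL n w r \<gamma> \<tau> (indicator S) i - indicator S i\<bar> \<le> \<tau> * N"
      by (rule main_bound[OF assms(4) assms(3) assms(7) _ Nb that]) (simp add: indicator_def)
    then show ?thesis using small by linarith
  qed
  show ?thesis
  proof
    show "okmbo_step n w r \<gamma> \<tau> S \<subseteq> S"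
    proof
      fix i assume "i \<in> okmbo_step n w r \<gamma> \<tau> S"
      then have i: "i \<in> V" and e: "expL n w r \<gamma> \<tau> (indicator S) i \<ge> 1/2" by (auto simp: okmbo_step_def)
      show "i \<in> S"
      proof (rule ccontr)
        assume "i \<notin> S"
        then show False using bd[OF i] e by (simp add: indicator_def)
      qed
    qed
  next
    show "S \<subseteq> okmbo_step n w r \<gamma> \<tau> S"
    proof
      fix i assume i: "i \<in> S"
      then have iV: "i \<in> V" using assms(5) by auto
      have "\<bar>expL n w r \<gamma> \<tau> (indicator S) i - 1\<bar> < 1/2" using bd[OF iV] i by (simp add: indicator_def)
      then have "expL n w r \<gamma> \<tau> (indicator S) i \<ge> 1/2" by linarith
      then show "i \<in> okmbo_step n w r \<gamma> \<tau> S" using iV by (simp add: okmbo_step_def)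
    qed
  qed
qed

end
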